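(* The relation on $\mathbb C^d_\Delta$ defined by $z\sim_N w$ if and only if $N\big(\overline{Az}\big)\cap\overline{Aw}\neq\emptyset$ (closures taken in $\mathbb C^d_\Delta$) is an equivalence relation.
   Context: Let $\mathfrak d$ be an $n$-dimensional real vector space, $\mathfrak d^*$ its dual and $\mathfrak d_{\mathbb C}=\mathfrak d\oplus i\mathfrak d$. A quasilattice in $\mathfrak d$ is the $\mathbb Z$-submodule generated by a finite set of vectors spanning $\mathfrak d$. Let $\Delta\subset\mathfrak d^*$ be an $n$-dimensional convex polytope (not necessarily rational or simple) with $d$ facets, written as $\Delta=\bigcap_{j=1}^d\{\mu\in\mathfrak d^*:\langle\mu,X_j\rangle\ge\lambda_j\}$, where $X_1,\dots,X_d\in\mathfrak d$ are chosen inward-pointing normals to the facets and $\lambda_j\in\mathbb R$; let $Q\subset\mathfrak d$ be a quasilattice containing $X_1,\dots,X_d$. For each face $F$ let $I_F\subseteq\{1,\dots,d\}$ be such that $F=\{\mu\in\Delta:\langle\mu,X_j\rangle=\lambda_j\iff j\in I_F\}$. Write $\mathbb C^F\times(\mathbb C^* )^{F^c}=\{z\in\mathbb C^d:z_j\ne0 \text{ for all } j\notin I_F\}$ and $\mathbb C^d_\Delta=\bigcup_F\mathbb C^F\times(\mathbb C^* )^{F^c}$ (union over all faces). Let $\pi:\mathbb R^d\to\mathfrak d$ with $e_j\mapsto X_j$, $\mathfrak n=\ker\pi$. $T^d=\mathbb R^d/\mathbb Z^d$ with projection $\exp$, acting on $\mathbb C^d$ by $\exp(Z)\cdot z=(e^{2\pi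 iZ_j}z_j)_j$ (extended to $\mathbb C^d/\mathbb Z^d$ for complex $Z$). $N=\ker(T^d\to\mathfrak d/Q)$ (induced by $\pi$) and $A=\{\exp(iY):Y\in\mathfrak n\}$, acting by $z_j\mapsto e^{-2\pi Y_j}z_j$. *)

theory Defs
  imports "HOL-Analysis.Analysis"
begin

text \<open>The dual space d* is identified with d (a Euclidean space) via the inner product,
  so the pairing <mu, X> is written mu \<bullet> X. Indices 1..d are a finite type 'd,
  C^d is complex^'d and R^d is real^'d.\<close>

definition int_span :: "'a::real_vector set \<Rightarrow> 'a set" where
  "int_span S = {v. \<exists>k :: 'a \<Rightarrow> int. \<exists>T. finite T \<and> T \<subseteq> S \<and> v = (\<Sum>s\<in>T. of_int (k s) *\<^sub>R s)}"

definition quasilattice :: "'a::euclidean_space set \<Rightarrow> bool" where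
  "quasilattice Q \<longleftrightarrow> (\<exists>S. finite S \<and> span S = UNIV \<and> Q = int_span S)"

definition piX :: "('d::finite \<Rightarrow> 'a::real_vector) \<Rightarrow> real^'d \<Rightarrow> 'a" where
  "piX X Z = (\<Sum>j\<in>UNIV. (Z $ j) *\<^sub>R X j)"

definition face_index :: "('d::finite \<Rightarrow> 'a::euclidean_space) \<Rightarrow> ('d \<Rightarrow> real) \<Rightarrow> 'a set \<Rightarrow> 'd set" where
  "face_index X lam F = {j. \<forall>\<mu>\<in>F. \<mu> \<bullet> X j = lam j}"

definition CdDelta :: "'a::euclidean_space set \<Rightarrow> ('d::finite \<Rightarrow> 'a) \<Rightarrow> ('d \<Rightarrow> real) \<Rightarrow> (complex^'d) set" where
  "CdDelta \<Delta> X lam = (\<Union>F\<in>{F. F face_of \<Delta> \<and> F \<noteq> {}}.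
      {z. \<forall>j. j \<notin> face_index X lam F \<longrightarrow> z $ j \<noteq> 0})"

text \<open>Action of exp(Z) \<in> T^d, Z \<in> R^d.\<close>
definition torus_act :: "real^'d::finite \<Rightarrow> complex^'d \<Rightarrow> complex^'d" where
  "torus_act Z z = (\<chi> j. exp (2 * pi * \<i> * complex_of_real (Z $ j)) * z $ j)"

text \<open>Action of exp(iY) \<in> A, Y \<in> n = ker pi: z_j \<mapsto> e^{-2 pi Y_j} z_j.\<close>
definition A_act :: "real^'d::finite \<Rightarrow> complex^'d \<Rightarrow> complex^'d" where
  "A_act Y z = (\<chi> j. complex_of_real (exp (- 2 * pi * (Y $ j))) * z $ j)"

definition A_orbit :: "('d::finite \<Rightarrow> 'a::real_vector) \<Rightarrow> complex^'d \<Rightarrow> (complex^'d) set" where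
  "A_orbit X z = {A_act Y z | Y. piX X Y = 0}"

text \<open>N = ker(T^d \<rightarrow> d/Q) = {exp Z | pi Z \<in> Q}; image N S of a set S.\<close>
definition N_image :: "('d::finite \<Rightarrow> 'a::real_vector) \<Rightarrow> 'a set \<Rightarrow> (complex^'d) set \<Rightarrow> (complex^'d) set" where
  "N_image X Q S = {torus_act Z w | Z w. piX X Z \<in> Q \<and> w \<in> S}"

definition rel_closure :: "'b::topological_space set \<Rightarrow> 'b set \<Rightarrow> 'b set" where
  "rel_closure U S = closure S \<inter> U"

definition simN :: "'a::euclidean_space set \<Rightarrow> ('d::finite \<Rightarrow> 'a) \<Rightarrow> ('d \<Rightarrow> real) \<Rightarrow> 'a set
    \<Rightarrow> complex^'d \<Rightarrow> complex^'d \<Rightarrow> bool" where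
  "simN \<Delta> X lam Q z w \<longleftrightarrow>
     N_image X Q (rel_closure (CdDelta \<Delta> X lam) (A_orbit X z))
       \<inter> rel_closure (CdDelta \<Delta> X lam) (A_orbit X w) \<noteq> {}"

end

theory Submission
  imports Defs
begin

lemma piX_add: "piX X (a + b) = piX X a + piX X b"
  by (simp add: piX_def scaleR_add_left sum.distrib)

lemma piX_uminus: "piX X (- a) = - piX X a"
  by (simp add: piX_def sum_negf)

lemma piX_zero: "piX X 0 = 0"
  by (simp add: piX_def)

lemma piX_scale: "piX X (t *\<^sub>R a) = t *\<^sub>R piX X a"
  by (simp add: piX_def scaleR_sum_right)

lemma int_span_zero: "0 \<in> int_span S"
  unfolding int_span_def by (rule CollectI, rule exI[of _ "\<lambda>_. 0"], rule exI[of _ "{}"]) simp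

lemma int_span_uminus: assumes "v \<in> int_span S" shows "- v \<in> int_span S"
proof -
  obtain k T where T: "finite T" "T \<subseteq> S" "v = (\<Sum>s\<in>T. of_int (k s) *\<^sub>R s)"
    using assms unfolding int_span_def by blast
  show ?thesis unfolding int_span_def
    by (rule CollectI, rule exI[of _ "\<lambda>s. - k s"], rule exI[of _ T]) (simp add: T sum_negf)
qed

lemma int_span_add: assumes "v \<in> int_span S" "u \<in> int_span S" shows "v + u \<in> int_span S"
proof -
  obtain k T where T: "finite T" "T \<subseteq> S" "v = (\<Sum>s\<in>T. of_int (k s) *\<^sub>R s)"
    using assms unfolding int_span_def by blast
  obtain k' T' where T': "finite T'" "T' \<subseteq> S" "u = (\<Sum>s\<in>T'. of_int (k' s) *\<^sub>R s)"
    using assms unfolding int_span_def by blast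
  define k'' where "k'' s = (if s \<in> T then k s else 0) + (if s \<in> T' then k' s else 0)" for s
  have 1: "(\<Sum>s\<in>T. real_of_int (k s) *\<^sub>R s) = (\<Sum>s\<in>T \<union> T'. real_of_int (if s \<in> T then k s else 0) *\<^sub>R s)"
    using T T' by (intro sum.mono_neutral_cong_left) auto
  have 2: "(\<Sum>s\<in>T'. real_of_int (k' s) *\<^sub>R s) = (\<Sum>s\<in>T \<union> T'. real_of_int (if s \<in> T' then k' s else 0) *\<^sub>R s)"
    using T T' by (intro sum.mono_neutral_cong_left) auto
  show ?thesis unfolding int_span_def
    apply (rule CollectI, rule exI[of _ k''], rule exI[of _ "T \<union> T'"])
    using T T' by (simp add: 1 2 k''_def scaleR_add_left sum.distrib[symmetric])
qed

lemma quasilattice_zero: "quasilattice Q \<Longrightarrow> 0 \<in> Q"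
  by (auto simp: quasilattice_def int_span_zero)
lemma quasilattice_uminus: "quasilattice Q \<Longrightarrow> v \<in> Q \<Longrightarrow> - v \<in> Q"
  by (auto simp: quasilattice_def int_span_uminus)
lemma quasilattice_add: "quasilattice Q \<Longrightarrow> v \<in> Q \<Longrightarrow> u \<in> Q \<Longrightarrow> v + u \<in> Q"
  by (auto simp: quasilattice_def int_span_add)

lemma torus_act_nth: "torus_act Z z $ j = exp (2 * pi * \<i> * complex_of_real (Z $ j)) * z $ j"
  by (simp add: torus_act_def)
lemma A_act_nth: "A_act Y z $ j = complex_of_real (exp (- 2 * pi * (Y $ j))) * z $ j"
  by (simp add: A_act_def)

lemma torus_A_comm: "torus_act Z (A_act Y z) = A_act Y (torus_act Z z)"
  by (simp add: vec_eq_iff torus_act_nth A_act_nth)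

lemma torus_inv: "torus_act (- Z) (torus_act Z z) = z"
  by (simp add: vec_eq_iff torus_act_nth exp_add[symmetric] algebra_simps)

lemma torus_comp: "torus_act (Z1 + Z2) (torus_act (- Z1) x) = torus_act Z2 x"
  by (simp add: vec_eq_iff torus_act_nth exp_add[symmetric] algebra_simps)

lemma torus_zero: "torus_act 0 z = z"
  by (simp add: vec_eq_iff torus_act_nth)

lemma A_act_comp: "A_act Y (A_act Y' z) = A_act (Y + Y') z"
  by (simp add: vec_eq_iff A_act_nth distrib_left exp_diff exp_minus of_real_mult[symmetric] field_simps del: of_real_mult)

lemma A_act_zero: "A_act 0 z = z"
  by (simp add: vec_eq_iff A_act_nth)

lemma torus_nz: "torus_act Z z $ j \<noteq> 0 \<longleftrightarrow> z $ j \<noteq> 0"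
  by (simp add: torus_act_nth)

lemma torus_CdDelta: "z \<in> CdDelta D X lam \<Longrightarrow> torus_act Z z \<in> CdDelta D X lam"
  unfolding CdDelta_def by (auto simp: torus_nz)

lemma continuous_torus: "continuous_on S (torus_act Z)"
  unfolding torus_act_def by (intro continuous_intros)

lemma continuous_A: "continuous_on S (A_act Y)"
  unfolding A_act_def by (intro continuous_intros)

lemma A_orbit_self: "z \<in> A_orbit X z"
  unfolding A_orbit_def by (auto intro!: exI[of _ 0] simp: A_act_zero piX_zero)

lemma A_act_orbit: "piX X Y = 0 \<Longrightarrow> A_act Y ` A_orbit X w \<subseteq> A_orbit X w"
  unfolding A_orbit_def by (auto simp: A_act_comp piX_add)

lemma closure_A_mono:
  assumes "p \<in> closure (A_orbit X w)"
  shows "closure (A_orbit X p) \<subseteq> closure (A_orbit X w)"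
proof (rule closure_minimal)
  show "A_orbit X p \<subseteq> closure (A_orbit X w)"
  proof
    fix q assume "q \<in> A_orbit X p"
    then obtain Y where q: "q = A_act Y p" "piX X Y = 0" by (auto simp: A_orbit_def)
    have "A_act Y ` closure (A_orbit X w) \<subseteq> closure (A_orbit X w)"
      using A_act_orbit[OF q(2)] closure_subset
      by (intro image_closure_subset continuous_A) auto
    then show "q \<in> closure (A_orbit X w)" using assms q by auto
  qed
qed auto

lemma torus_closure:
  "torus_act Z ` closure (A_orbit X p) \<subseteq> closure (A_orbit X (torus_act Z p))"
proof (rule image_closure_subset[OF continuous_torus])
  show "torus_act Z ` A_orbit X p \<subseteq> closure (A_orbit X (torus_act Z p))"
    using closure_subset by (fastforce simp: A_orbit_def torus_A_comm)
qed auto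


lemma ln_gap:
  fixes a b :: "nat \<Rightarrow> real"
  assumes apos: "\<And>n. a n > 0" and bpos: "\<And>n. b n > 0"
    and la: "a \<longlonglongrightarrow> A" and lb: "b \<longlonglongrightarrow> B" and A: "A \<ge> 0" and B: "B \<ge> 0" and AB: "A > B"
  shows "\<exists>\<delta>>0. eventually (\<lambda>n. ln (a n) - ln (b n) > \<delta>) sequentially"
proof -
  define m1 where "m1 = B + (A - B) / 3"
  define m2 where "m2 = B + 2 * (A - B) / 3"
  have m: "0 < m1" "m1 < m2" "m2 < A" "B < m1" using AB B unfolding m1_def m2_def by (auto simp: field_simps)
  have e1: "eventually (\<lambda>n. a n > m2) sequentially" using la m order_tendstoD by blast
  have e2: "eventually (\<lambda>n. b n < m1) sequentially" using lb m order_tendstoD by blast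
  have "eventually (\<lambda>n. ln (a n) - ln (b n) > ln m2 - ln m1) sequentially"
    using e1 e2
  proof eventually_elim
    case (elim n)
    have "ln m2 < ln (a n)" using elim m by (simp add: ln_less_cancel_iff)
    moreover have "ln (b n) < ln m1" using elim m bpos[of n] by (simp add: ln_less_cancel_iff)
    ultimately show ?case by simp
  qed
  moreover have "ln m2 - ln m1 > 0" using m by (simp add: ln_less_cancel_iff)
  ultimately show ?thesis by blast
qed

lemma phase_lim:
  fixes y :: "nat \<Rightarrow> real" and w c :: complex
  assumes lim: "(\<lambda>n. complex_of_real (exp (- 2 * pi * y n)) * w) \<longlonglongrightarrow> c"
  shows "c = complex_of_real (cmod c / cmod w) * w"
    and "(\<lambda>n. exp (- 2 * pi * y n) * cmod w) \<longlonglongrightarrow> cmod c"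
proof -
  have n: "(\<lambda>n. cmod (complex_of_real (exp (- 2 * pi * y n)) * w)) \<longlonglongrightarrow> cmod c"
    using tendsto_norm[OF lim] .
  then show l2: "(\<lambda>n. exp (- 2 * pi * y n) * cmod w) \<longlonglongrightarrow> cmod c"
    by (simp add: norm_mult)
  show "c = complex_of_real (cmod c / cmod w) * w"
  proof (cases "w = 0")
    case True
    then have "(\<lambda>n. 0) \<longlonglongrightarrow> c" using lim by simp
    then have "c = 0" using LIMSEQ_unique tendsto_const by blast
    then show ?thesis by simp
  next
    case False
    have "(\<lambda>n. exp (- 2 * pi * y n) * cmod w / cmod w) \<longlonglongrightarrow> cmod c / cmod w"
      by (intro tendsto_divide l2) (use False in auto)
    then have "(\<lambda>n. exp (- 2 * pi * y n)) \<longlonglongrightarrow> cmod c / cmod w" using False by simp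
    then have "(\<lambda>n. complex_of_real (exp (- 2 * pi * y n)) * w) \<longlonglongrightarrow> complex_of_real (cmod c / cmod w) * w"
      by (intro tendsto_intros)
    then show ?thesis using lim LIMSEQ_unique by blast
  qed
qed

lemma coord_gap:
  fixes y y' :: "nat \<Rightarrow> real" and w c c' :: complex
  assumes lim: "(\<lambda>n. complex_of_real (exp (- 2 * pi * y n)) * w) \<longlonglongrightarrow> c"
    and lim': "(\<lambda>n. complex_of_real (exp (- 2 * pi * y' n)) * w) \<longlonglongrightarrow> c'"
    and ne: "cmod c \<noteq> cmod c'"
  shows "eventually (\<lambda>n. (cmod c ^ 2 - cmod c' ^ 2) * (y' n - y n) > 0) sequentially"
proof -
  have w: "w \<noteq> 0"
  proof
    assume "w = 0"
    then have "c = 0" "c' = 0" using phase_lim(1)[OF lim] phase_lim(1)[OF lim'] by auto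
    then show False using ne by simp
  qed
  define a where "a = (\<lambda>n. exp (- 2 * pi * y n) * cmod w)"
  define b where "b = (\<lambda>n. exp (- 2 * pi * y' n) * cmod w)"
  have apos: "a n > 0" and bpos: "b n > 0" for n using w by (auto simp: a_def b_def)
  have la: "a \<longlonglongrightarrow> cmod c" and lb: "b \<longlonglongrightarrow> cmod c'"
    using phase_lim(2)[OF lim] phase_lim(2)[OF lim'] by (simp_all add: a_def b_def)
  have diff: "y' n - y n = (ln (a n) - ln (b n)) / (2 * pi)" for n
    using w by (simp add: a_def b_def ln_mult field_simps)
  show ?thesis
  proof (cases "cmod c > cmod c'")
    case True
    obtain \<delta> where "\<delta> > 0" and ev: "eventually (\<lambda>n. ln (a n) - ln (b n) > \<delta>) sequentially"
      using ln_gap[OF apos bpos la lb _ _ True] by auto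
    have sq: "cmod c ^ 2 - cmod c' ^ 2 > 0" using True
      by (simp add: power_strict_mono)
    show ?thesis using ev
    proof eventually_elim
      case (elim n)
      then have "ln (a n) - ln (b n) > 0" using \<open>\<delta> > 0\<close> by linarith
      then show ?case using sq by (simp add: diff)
    qed
  next
    case False
    then have F: "cmod c' > cmod c" using ne by linarith
    obtain \<delta> where "\<delta> > 0" and ev: "eventually (\<lambda>n. ln (b n) - ln (a n) > \<delta>) sequentially"
      using ln_gap[OF bpos apos lb la _ _ F] by auto
    have sq: "cmod c ^ 2 - cmod c' ^ 2 < 0" using F
      by (simp add: power_strict_mono)
    show ?thesis using ev
    proof eventually_elim
      case (elim n)
      then have "ln (a n) - ln (b n) < 0" using \<open>\<delta> > 0\<close> by linarith
      then show ?case using sq by (simp add: diff mult_neg_neg)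
    qed
  qed
qed

definition balanced :: "('d::finite \<Rightarrow> 'a::euclidean_space) \<Rightarrow> ('d \<Rightarrow> real) \<Rightarrow> complex^'d \<Rightarrow> bool" where
  "balanced X lam x \<longleftrightarrow> (\<exists>\<mu>. \<forall>j. cmod (x $ j) ^ 2 = \<mu> \<bullet> X j - lam j)"

lemma orbit_seq:
  assumes "x \<in> closure (A_orbit X w)"
  obtains Y where "\<And>n. piX X (Y n) = 0" "(\<lambda>n. A_act (Y n) w) \<longlonglongrightarrow> x"
proof -
  obtain q where q: "\<And>n. q n \<in> A_orbit X w" "q \<longlonglongrightarrow> x"
    using assms closure_sequential by blast
  then have "\<forall>n. \<exists>Y. piX X Y = 0 \<and> q n = A_act Y w" by (auto simp: A_orbit_def)
  then obtain Y where Y: "\<And>n. piX X (Y n) = 0" "\<And>n. q n = A_act (Y n) w" by metis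
  then have "q = (\<lambda>n. A_act (Y n) w)" by auto
  then show ?thesis using that[OF Y(1)] q by auto
qed

lemma balanced_unique:
  assumes x: "x \<in> closure (A_orbit X w)" and x': "x' \<in> closure (A_orbit X w)"
    and bx: "balanced X lam x" and bx': "balanced X lam x'"
  shows "x = x'"
proof -
  obtain \<mu> where mu: "\<And>j. cmod (x $ j) ^ 2 = \<mu> \<bullet> X j - lam j" using bx by (auto simp: balanced_def)
  obtain \<mu>' where mu': "\<And>j. cmod (x' $ j) ^ 2 = \<mu>' \<bullet> X j - lam j" using bx' by (auto simp: balanced_def)
  obtain Y where Y: "\<And>n. piX X (Y n) = 0" "(\<lambda>n. A_act (Y n) w) \<longlonglongrightarrow> x" using orbit_seq[OF x] by blast
  obtain Y' where Y': "\<And>n. piX X (Y' n) = 0" "(\<lambda>n. A_act (Y' n) w) \<longlonglongrightarrow> x'" using orbit_seq[OF x'] by blast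
  have lj: "(\<lambda>n. complex_of_real (exp (- 2 * pi * (Y n $ j))) * w $ j) \<longlonglongrightarrow> x $ j" for j
    using tendsto_vec_nth[OF Y(2), of j] by (simp add: A_act_nth)
  have lj': "(\<lambda>n. complex_of_real (exp (- 2 * pi * (Y' n $ j))) * w $ j) \<longlonglongrightarrow> x' $ j" for j
    using tendsto_vec_nth[OF Y'(2), of j] by (simp add: A_act_nth)
  define D where "D n j = (cmod (x $ j) ^ 2 - cmod (x' $ j) ^ 2) * (Y' n $ j - Y n $ j)" for n j
  have sum0: "(\<Sum>j\<in>UNIV. D n j) = 0" for n
  proof -
    have "(\<Sum>j\<in>UNIV. D n j) = (\<Sum>j\<in>UNIV. ((\<mu> - \<mu>') \<bullet> X j) * (Y' n $ j - Y n $ j))"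
      by (simp add: D_def mu mu' inner_diff_left)
    also have "\<dots> = (\<mu> - \<mu>') \<bullet> piX X (Y' n - Y n)"
      by (simp add: piX_def inner_sum_right mult.commute)
    also have "piX X (Y' n - Y n) = 0"
      using piX_add[of X "Y' n" "- Y n"] piX_uminus[of X "Y n"] Y(1) Y'(1) by simp
    finally show ?thesis by simp
  qed
  have eqmod: "cmod (x $ j) = cmod (x' $ j)" for j
  proof (rule ccontr)
    assume ne: "cmod (x $ j) \<noteq> cmod (x' $ j)"
    have ev0: "eventually (\<lambda>n. D n j > 0) sequentially"
      using coord_gap[OF lj lj' ne] by (simp add: D_def)
    have evall: "eventually (\<lambda>n. \<forall>i. D n i \<ge> 0) sequentially"
    proof (rule eventually_all_finite)
      fix i
      show "eventually (\<lambda>n. D n i \<ge> 0) sequentially"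
      proof (cases "cmod (x $ i) = cmod (x' $ i)")
        case True then show ?thesis by (simp add: D_def)
      next
        case False
        show ?thesis using coord_gap[OF lj lj' False]
          by (rule eventually_mono) (simp add: D_def)
      qed
    qed
    have "eventually (\<lambda>n. False) sequentially"
      using ev0 evall
    proof eventually_elim
      case (elim n)
      have "0 < (\<Sum>i\<in>UNIV. D n i)"
        by (rule sum_pos2[of UNIV j]) (use elim in auto)
      then show ?case using sum0[of n] by simp
    qed
    then show False by simp
  qed
  show ?thesis
  proof (rule vec_eq_iff[THEN iffD2], rule allI)
    fix j
    show "x $ j = x' $ j"
      using phase_lim(1)[OF lj[of j]] phase_lim(1)[OF lj'[of j]] eqmod[of j] by metis
  qed
qed


lemma perp_kernel:
  fixes X :: "'d::finite \<Rightarrow> 'a::euclidean_space" and a :: "real^'d"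
  assumes h: "\<And>v. piX X v = 0 \<Longrightarrow> (\<Sum>j\<in>UNIV. a $ j * v $ j) = 0"
  shows "\<exists>\<mu>. \<forall>j. a $ j = \<mu> \<bullet> X j"
proof -
  define L where "L = (\<lambda>\<mu>::'a. (\<chi> j. \<mu> \<bullet> X j) :: real^'d)"
  have lin: "linear L" unfolding L_def
    by (rule linearI) (simp_all add: vec_eq_iff inner_add_left)
  have sub: "subspace (range L)" using linear_subspace_image[OF lin subspace_UNIV] by simp
  obtain y z where y: "y \<in> span (range L)" and z: "\<And>w. w \<in> span (range L) \<Longrightarrow> orthogonal z w"
    and a: "a = y + z"
    using orthogonal_subspace_decomp_exists[of "range L" a] by blast
  have ip: "z \<bullet> L \<mu> = \<mu> \<bullet> piX X z" for \<mu>
    by (simp add: L_def inner_vec_def piX_def inner_sum_right mult.commute)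
  have "z \<bullet> L (piX X z) = 0" using z[of "L (piX X z)"] span_base[of "L (piX X z)" "range L"]
    by (auto simp: orthogonal_def)
  then have pz: "piX X z = 0" using ip by simp
  have "a \<bullet> z = 0" using h[OF pz] by (simp add: inner_vec_def mult.commute)
  moreover have "y \<bullet> z = 0" using z[OF y] by (simp add: orthogonal_def inner_commute)
  ultimately have "z \<bullet> z = 0" using a by (simp add: inner_add_left)
  then have "z = 0" by simp
  then have "a \<in> range L" using a y span_eq_iff[THEN iffD2, OF sub] by simp
  then obtain \<mu> where "a = L \<mu>" by blast
  then show ?thesis by (auto simp: L_def)
qed

lemma exp_sq: "exp (a::real) ^ 2 = exp (2 * a)"
  unfolding power2_eq_square mult_2 by (rule exp_add[symmetric])

lemma term_bound:
  fixes rho s y :: real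
  assumes rho: "rho \<ge> 0" and s: "s \<ge> 0" and sp: "s > 0 \<Longrightarrow> rho > 0"
  shows "exp (- 2 * pi * y) ^ 2 * rho + 4 * pi * s * y \<ge>
         exp (- 2 * pi * y) ^ 2 * rho / 2 + (if s = 0 then 0 else s * (ln rho - ln (2 * s) + 1))"
proof (cases "s = 0")
  case True then show ?thesis using rho by simp
next
  case False
  then have s0: "s > 0" using s by simp
  then have r0: "rho > 0" using sp by simp
  define r where "r = exp (- 2 * pi * y) ^ 2 * rho"
  have rpos: "r > 0" using r0 by (simp add: r_def)
  have lnr: "ln r = - 4 * pi * y + ln rho" using r0 by (simp add: r_def ln_mult exp_sq)
  have "ln (r / (2 * s)) \<le> r / (2 * s) - 1" using rpos s0 by (intro ln_le_minus_one) simp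
  then have "ln r - ln (2 * s) \<le> r / (2 * s) - 1" using rpos s0 by (simp add: ln_div)
  then have "s * (ln r - ln (2 * s)) \<le> s * (r / (2 * s) - 1)" using s0 by (simp add: mult_left_mono)
  also have "s * (r / (2 * s) - 1) = r / 2 - s" using s0 by (simp add: field_simps)
  finally have "s * (ln r - ln (2 * s)) \<le> r / 2 - s" .
  then have "r + 4 * pi * s * y \<ge> r / 2 + s * (ln rho - ln (2 * s) + 1)"
    using lnr by (simp add: algebra_simps)
  then show ?thesis using False by (simp add: r_def)
qed

lemma A_act_cmod_sq: "cmod (A_act Y p $ j) ^ 2 = exp (- 2 * pi * (Y $ j)) ^ 2 * cmod (p $ j) ^ 2"
  by (simp add: A_act_nth norm_mult power_mult_distrib)


lemma cmod_shift: "cmod (A_act (Y + t *\<^sub>R v) p $ j) ^ 2 = cmod (A_act Y p $ j) ^ 2 * exp (- 2 * pi * (t * v $ j)) ^ 2"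
proof -
  have "exp (- 2 * pi * ((Y + t *\<^sub>R v) $ j)) = exp (- 2 * pi * (Y $ j)) * exp (- 2 * pi * (t * v $ j))"
    by (simp add: exp_add[symmetric] algebra_simps)
  then show ?thesis by (simp add: A_act_cmod_sq power_mult_distrib)
qed

lemma deriv_g:
  fixes c :: "'d::finite \<Rightarrow> real" and v :: "real^'d"
  shows "((\<lambda>t. (\<Sum>j\<in>UNIV. c j * (exp (- 2 * pi * (t * v $ j)) ^ 2 - 1)) - 4 * pi * t * L)
          has_field_derivative ((\<Sum>j\<in>UNIV. c j * (- 4 * pi * v $ j)) - 4 * pi * L)) (at 0)"
proof -
  have d1: "((\<lambda>t. c j * (exp (- 2 * pi * (t * v $ j)) ^ 2 - 1)) has_field_derivative c j * (- 4 * pi * v $ j)) (at 0)" for j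
    by (auto intro!: derivative_eq_intros simp: field_simps)
  have d2: "((\<lambda>t. 4 * pi * t * L) has_field_derivative 4 * pi * L) (at 0)"
    by (auto intro!: derivative_eq_intros)
  show ?thesis by (intro DERIV_diff DERIV_sum d1 d2)
qed

lemma exists_balanced:
  fixes X :: "'d::finite \<Rightarrow> 'a::euclidean_space"
  assumes Delta_def: "\<Delta> = {\<mu>. \<forall>j. \<mu> \<bullet> X j \<ge> lam j}" and p: "p \<in> CdDelta \<Delta> X lam"
  shows "\<exists>x \<in> closure (A_orbit X p). balanced X lam x"
proof -
  obtain F where F: "F face_of \<Delta>" "F \<noteq> {}" "\<And>j. j \<notin> face_index X lam F \<Longrightarrow> p $ j \<noteq> 0"
    using p unfolding CdDelta_def by blast
  obtain \<mu>0 where "\<mu>0 \<in> F" using F by blast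
  then have mu0: "\<mu>0 \<in> \<Delta>" using face_of_imp_subset F by blast
  define s where "s j = \<mu>0 \<bullet> X j - lam j" for j
  have s0: "s j \<ge> 0" for j using mu0 Delta_def s_def by auto
  have sp: "cmod (p $ j) ^ 2 > 0" if "s j > 0" for j
  proof (rule ccontr)
    assume "\<not> cmod (p $ j) ^ 2 > 0"
    then have "p $ j = 0" by simp
    then have "j \<in> face_index X lam F" using F(3) by blast
    then have "\<mu>0 \<bullet> X j = lam j" using \<open>\<mu>0 \<in> F\<close> by (auto simp: face_index_def)
    then show False using that by (simp add: s_def)
  qed
  define N where "N = {Y. piX X Y = 0}"
  define f where "f Y = (\<Sum>j\<in>UNIV. cmod (A_act Y p $ j) ^ 2) - 4 * pi * (\<Sum>j\<in>UNIV. lam j * Y $ j)" for Y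
  define K where "K = (\<Sum>j\<in>UNIV. if s j = 0 then 0 else s j * (ln (cmod (p $ j) ^ 2) - ln (2 * s j) + 1))"
  have fbound: "f Y \<ge> (\<Sum>j\<in>UNIV. cmod (A_act Y p $ j) ^ 2) / 2 + K" if Y: "Y \<in> N" for Y
  proof -
    have "(\<Sum>j\<in>UNIV. (\<mu>0 \<bullet> X j) * Y $ j) = \<mu>0 \<bullet> piX X Y"
      by (simp add: piX_def inner_sum_right mult.commute)
    also have "\<dots> = 0" using Y by (simp add: N_def)
    finally have z: "(\<Sum>j\<in>UNIV. (\<mu>0 \<bullet> X j) * Y $ j) = 0" .
    have "(\<Sum>j\<in>UNIV. s j * Y $ j) = (\<Sum>j\<in>UNIV. (\<mu>0 \<bullet> X j) * Y $ j) - (\<Sum>j\<in>UNIV. lam j * Y $ j)"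
      by (simp add: s_def left_diff_distrib sum_subtractf)
    then have "f Y = (\<Sum>j\<in>UNIV. cmod (A_act Y p $ j) ^ 2 + 4 * pi * s j * Y $ j)"
      using z by (simp add: f_def sum.distrib sum_distrib_left[symmetric] mult.assoc)
    also have "\<dots> \<ge> (\<Sum>j\<in>UNIV. cmod (A_act Y p $ j) ^ 2 / 2 + (if s j = 0 then 0 else s j * (ln (cmod (p $ j) ^ 2) - ln (2 * s j) + 1)))"
      by (intro sum_mono) (use term_bound[OF _ s0 sp] in \<open>auto simp: A_act_cmod_sq\<close>)
    finally show ?thesis by (simp add: K_def sum.distrib sum_divide_distrib)
  qed
  have fK: "f Y \<ge> K" if "Y \<in> N" for Y
  proof -
    have "(\<Sum>j\<in>UNIV. cmod (A_act Y p $ j) ^ 2) \<ge> 0" by (intro sum_nonneg) simp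
    then show ?thesis using fbound[OF that] by linarith
  qed
  have N0: "0 \<in> N" by (simp add: N_def piX_zero)
  have bdd: "bdd_below (f ` N)" unfolding bdd_below_def using fK by blast
  define m where "m = Inf (f ` N)"
  have mle: "m \<le> f Y" if "Y \<in> N" for Y using cInf_lower[OF _ bdd] that by (auto simp: m_def)
  have "\<forall>k::nat. \<exists>Y\<in>N. f Y < m + inverse (real (Suc k))"
  proof
    fix k :: nat
    have "Inf (f ` N) < m + inverse (real (Suc k))" by (simp add: m_def)
    then obtain y where "y \<in> f ` N" "y < m + inverse (real (Suc k))" using cInf_lessD[of "f ` N"] N0 by blast
    then show "\<exists>Y\<in>N. f Y < m + inverse (real (Suc k))" by blast
  qed
  then obtain Ys where Ys: "\<And>k. Ys k \<in> N" "\<And>k. f (Ys k) < m + inverse (real (Suc k))" by metis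
  have flim: "(\<lambda>k. f (Ys k)) \<longlonglongrightarrow> m"
  proof (rule tendsto_sandwich[OF _ _ tendsto_const LIMSEQ_inverse_real_of_nat_add])
    show "\<forall>\<^sub>F n in sequentially. m \<le> f (Ys n)" using mle Ys(1) by simp
    show "\<forall>\<^sub>F n in sequentially. f (Ys n) \<le> m + inverse (real (Suc n))" by (rule always_eventually, rule allI, rule less_imp_le, rule Ys(2))
  qed
  define xs where "xs k = A_act (Ys k) p" for k
  define R where "R = sqrt (2 * (m + 1 - K))"
  have xsb: "xs k \<in> cball 0 R" for k
  proof -
    have "inverse (real (Suc k)) \<le> 1" by (simp add: inverse_le_1_iff del: of_nat_Suc)
    then have "f (Ys k) \<le> m + 1" using Ys(2)[of k] by linarith
    then have "(\<Sum>j\<in>UNIV. cmod (xs k $ j) ^ 2) \<le> 2 * (m + 1 - K)"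
      using fbound[OF Ys(1)[of k]] by (simp add: xs_def)
    then have "norm (xs k) \<le> R" by (simp add: norm_vec_def L2_set_def R_def)
    then show ?thesis by simp
  qed
  obtain l r where l: "strict_mono (r :: nat \<Rightarrow> nat)" "(xs \<circ> r) \<longlonglongrightarrow> l"
    using seq_compactE[OF compact_imp_seq_compact[OF compact_cball], of xs 0 R] xsb by metis
  have lcl: "l \<in> closure (A_orbit X p)"
    unfolding closure_sequential
    by (rule exI[of _ "xs \<circ> r"]) (use l Ys(1) in \<open>auto simp: xs_def A_orbit_def N_def\<close>)
  have flimr: "(\<lambda>n. f (Ys (r n))) \<longlonglongrightarrow> m" using LIMSEQ_subseq_LIMSEQ[OF flim l(1)] by (simp add: comp_def)
  have orth: "(\<Sum>j\<in>UNIV. (cmod (l $ j) ^ 2 + lam j) * v $ j) = 0" if v: "piX X v = 0" for v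
  proof -
    define L where "L = (\<Sum>j\<in>UNIV. lam j * v $ j)"
    define g where "g t = (\<Sum>j\<in>UNIV. cmod (l $ j) ^ 2 * (exp (- 2 * pi * (t * v $ j)) ^ 2 - 1)) - 4 * pi * t * L" for t
    have gnn: "g t \<ge> 0" for t
    proof -
      define G where "G k = (\<Sum>j\<in>UNIV. cmod (xs k $ j) ^ 2 * (exp (- 2 * pi * (t * v $ j)) ^ 2 - 1)) - 4 * pi * t * L" for k
      have Gk: "G k \<ge> m - f (Ys k)" for k
      proof -
        have "Ys k + t *\<^sub>R v \<in> N" using Ys(1)[of k] v by (simp add: N_def piX_add piX_scale)
        then have "m \<le> f (Ys k + t *\<^sub>R v)" by (rule mle)
        also have "f (Ys k + t *\<^sub>R v) = f (Ys k) + G k"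
          by (simp add: f_def G_def cmod_shift xs_def L_def algebra_simps sum.distrib sum_subtractf
                sum_distrib_left)
        finally show ?thesis by simp
      qed
      have "(\<lambda>n. G (r n)) \<longlonglongrightarrow> g t"
      proof -
        have "(\<lambda>n. (xs \<circ> r) n $ j) \<longlonglongrightarrow> l $ j" for j by (intro tendsto_vec_nth l(2))
        then have "(\<lambda>n. (\<Sum>j\<in>UNIV. cmod ((xs \<circ> r) n $ j) ^ 2 * (exp (- 2 * pi * (t * v $ j)) ^ 2 - 1)) - 4 * pi * t * L)
             \<longlonglongrightarrow> g t" unfolding g_def by (intro tendsto_intros l(2))
        then show ?thesis by (simp add: G_def comp_def)
      qed
      moreover have "(\<lambda>n. m - f (Ys (r n))) \<longlonglongrightarrow> m - m" by (intro tendsto_intros flimr)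
      ultimately show "g t \<ge> 0"
        using Gk by (intro tendsto_le[OF trivial_limit_sequentially]) auto
    qed
    have g0: "g 0 = 0" by (simp add: g_def)
    have loc: "\<forall>y. \<bar>0 - y\<bar> < 1 \<longrightarrow> g 0 \<le> g y" using gnn g0 by auto
    have dg: "(g has_real_derivative ((\<Sum>j\<in>UNIV. cmod (l $ j) ^ 2 * (- 4 * pi * v $ j)) - 4 * pi * L)) (at 0)"
      using deriv_g[of "\<lambda>j. cmod (l $ j) ^ 2" v L] unfolding g_def[symmetric] .
    have "(\<Sum>j\<in>UNIV. cmod (l $ j) ^ 2 * (- 4 * pi * v $ j)) - 4 * pi * L = 0"
      using DERIV_local_min[OF dg _ loc] by simp
    moreover have "(\<Sum>j\<in>UNIV. cmod (l $ j) ^ 2 * (- 4 * pi * v $ j)) - 4 * pi * L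
        = (\<Sum>j\<in>UNIV. (- 4 * pi) * ((cmod (l $ j) ^ 2 + lam j) * v $ j))"
      unfolding L_def sum_distrib_left sum_subtractf[symmetric] by (rule sum.cong) (auto simp: algebra_simps)
    ultimately have "- 4 * pi * (\<Sum>j\<in>UNIV. (cmod (l $ j) ^ 2 + lam j) * v $ j) = 0"
      by (simp only: sum_distrib_left)
    then show ?thesis by simp
  qed
  obtain \<mu> where "\<forall>j. (\<chi> j. cmod (l $ j) ^ 2 + lam j) $ j = \<mu> \<bullet> X j"
    using perp_kernel[of X "\<chi> j. cmod (l $ j) ^ 2 + lam j"] orth by auto
  then have "balanced X lam l" by (auto simp: balanced_def algebra_simps)
  then show ?thesis using lcl by blast
qed


lemma balanced_CdDelta:
  assumes Delta_def: "\<Delta> = {\<mu>. \<forall>j. \<mu> \<bullet> X j \<ge> lam j}" and cvx: "convex \<Delta>"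
    and facets: "\<And>j. {\<mu>\<in>\<Delta>. \<mu> \<bullet> X j = lam j} facet_of \<Delta>"
    and b: "balanced X lam x"
  shows "x \<in> CdDelta \<Delta> X lam"
proof -
  obtain \<mu> where mu: "\<And>j. cmod (x $ j) ^ 2 = \<mu> \<bullet> X j - lam j" using b by (auto simp: balanced_def)
  have "lam j \<le> \<mu> \<bullet> X j" for j using mu[of j] zero_le_power2[of "cmod (x $ j)"] by linarith
  then have muD: "\<mu> \<in> \<Delta>" unfolding Delta_def by blast
  define Z where "Z = {j. \<mu> \<bullet> X j = lam j}"
  define F where "F = \<Inter> (insert \<Delta> ((\<lambda>j. {\<mu>\<in>\<Delta>. \<mu> \<bullet> X j = lam j}) ` Z))"
  have Fface: "F face_of \<Delta>" unfolding F_def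
  proof (rule face_of_Inter)
    fix T assume "T \<in> insert \<Delta> ((\<lambda>j. {\<mu>\<in>\<Delta>. \<mu> \<bullet> X j = lam j}) ` Z)"
    then show "T face_of \<Delta>" using face_of_refl[OF cvx] facets by (auto simp: facet_of_def)
  qed simp
  have muF: "\<mu> \<in> F" using muD by (auto simp: F_def Z_def)
  have "x $ j \<noteq> 0" if "j \<notin> face_index X lam F" for j
  proof
    assume "x $ j = 0"
    then have "j \<in> Z" using mu[of j] by (simp add: Z_def)
    then have "j \<in> face_index X lam F" by (auto simp: face_index_def F_def)
    then show False using that by simp
  qed
  then show ?thesis unfolding CdDelta_def using Fface muF by blast
qed

lemma simN_iff:
  "simN \<Delta> X lam Q z w \<longleftrightarrow> (\<exists>Z u. piX X Z \<in> Q \<and> u \<in> closure (A_orbit X z) \<and> u \<in> CdDelta \<Delta> X lam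
      \<and> torus_act Z u \<in> closure (A_orbit X w) \<and> torus_act Z u \<in> CdDelta \<Delta> X lam)"
  unfolding simN_def N_image_def rel_closure_def by blast

theorem mainTheorem4:
  fixes \<Delta> :: "'a::euclidean_space set"
    and X :: "'d::finite \<Rightarrow> 'a"
    and lam :: "'d \<Rightarrow> real"
    and Q :: "'a set"
  assumes Delta_def: "\<Delta> = {\<mu>. \<forall>j. \<mu> \<bullet> X j \<ge> lam j}"
    and poly: "polytope \<Delta>"
    and full_dim: "aff_dim \<Delta> = int DIM('a)"
    and facets: "\<And>j. {\<mu>\<in>\<Delta>. \<mu> \<bullet> X j = lam j} facet_of \<Delta>"
    and facets_distinct: "inj (\<lambda>j. {\<mu>\<in>\<Delta>. \<mu> \<bullet> X j = lam j})"
    and all_facets: "\<And>F. F facet_of \<Delta> \<Longrightarrow> \<exists>j. F = {\<mu>\<in>\<Delta>. \<mu> \<bullet> X j = lam j}"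
    and Q: "quasilattice Q"
    and XQ: "\<And>j. X j \<in> Q"
  shows "equiv (CdDelta \<Delta> X lam)
           {(z, w). z \<in> CdDelta \<Delta> X lam \<and> w \<in> CdDelta \<Delta> X lam \<and> simN \<Delta> X lam Q z w}"
proof -
  let ?U = "CdDelta \<Delta> X lam"
  have cvx: "convex \<Delta>" using poly by (rule polytope_imp_convex)
  have refl: "simN \<Delta> X lam Q z z" if "z \<in> ?U" for z
    unfolding simN_iff
    apply (rule exI[of _ 0], rule exI[of _ z])
    using that closure_subset A_orbit_self[of z X] quasilattice_zero[OF Q]
    by (auto simp: piX_zero torus_zero)
  have sym: "simN \<Delta> X lam Q w z" if hs: "simN \<Delta> X lam Q z w" for z w
  proof -
    obtain Z u where h: "piX X Z \<in> Q" "u \<in> closure (A_orbit X z)" "u \<in> ?U"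
      "torus_act Z u \<in> closure (A_orbit X w)" "torus_act Z u \<in> ?U"
      using hs unfolding simN_iff by blast
    show ?thesis unfolding simN_iff
      apply (rule exI[of _ "- Z"], rule exI[of _ "torus_act Z u"])
      using h quasilattice_uminus[OF Q h(1)] by (simp add: piX_uminus torus_inv)
  qed
  have trans: "simN \<Delta> X lam Q z y" if zw: "simN \<Delta> X lam Q z w" and wy: "simN \<Delta> X lam Q w y" for z w y
  proof -
    obtain Z1 u1 where h1: "piX X Z1 \<in> Q" "u1 \<in> closure (A_orbit X z)" "u1 \<in> ?U"
      "torus_act Z1 u1 \<in> closure (A_orbit X w)" "torus_act Z1 u1 \<in> ?U"
      using zw unfolding simN_iff by blast
    obtain Z2 u2 where h2: "piX X Z2 \<in> Q" "u2 \<in> closure (A_orbit X w)" "u2 \<in> ?U"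
      "torus_act Z2 u2 \<in> closure (A_orbit X y)" "torus_act Z2 u2 \<in> ?U"
      using wy unfolding simN_iff by blast
    obtain x1 where x1: "x1 \<in> closure (A_orbit X (torus_act Z1 u1))" "balanced X lam x1"
      using exists_balanced[OF Delta_def h1(5)] by blast
    obtain x2 where x2: "x2 \<in> closure (A_orbit X u2)" "balanced X lam x2"
      using exists_balanced[OF Delta_def h2(3)] by blast
    have c1: "x1 \<in> closure (A_orbit X w)" using closure_A_mono[OF h1(4)] x1(1) by blast
    have c2: "x2 \<in> closure (A_orbit X w)" using closure_A_mono[OF h2(2)] x2(1) by blast
    have "x1 = x2" using balanced_unique[OF c1 c2 x1(2) x2(2)] .
    have xU: "x1 \<in> ?U" using balanced_CdDelta[OF Delta_def cvx facets x1(2)] .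
    have a1: "torus_act (- Z1) x1 \<in> closure (A_orbit X z)"
    proof -
      have "torus_act (- Z1) x1 \<in> closure (A_orbit X (torus_act (- Z1) (torus_act Z1 u1)))"
        using torus_closure x1(1) by blast
      then have "torus_act (- Z1) x1 \<in> closure (A_orbit X u1)" by (simp add: torus_inv)
      then show ?thesis using closure_A_mono[OF h1(2)] by blast
    qed
    have a2: "torus_act (Z1 + Z2) (torus_act (- Z1) x1) \<in> closure (A_orbit X y)"
    proof -
      have "torus_act Z2 x2 \<in> closure (A_orbit X (torus_act Z2 u2))"
        using torus_closure x2(1) by blast
      then show ?thesis using closure_A_mono[OF h2(4)] \<open>x1 = x2\<close> by (auto simp: torus_comp)
    qed
    show ?thesis unfolding simN_iff
      apply (rule exI[of _ "Z1 + Z2"], rule exI[of _ "torus_act (- Z1) x1"])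
      using a1 a2 torus_CdDelta[OF xU] torus_CdDelta[OF torus_CdDelta[OF xU]] quasilattice_add[OF Q h1(1) h2(1)]
      by (simp add: piX_add)
  qed
  show ?thesis
  proof (rule equivI)
    show "{(z, w). z \<in> ?U \<and> w \<in> ?U \<and> simN \<Delta> X lam Q z w} \<subseteq> ?U \<times> ?U" by auto
    show "refl_on ?U {(z, w). z \<in> ?U \<and> w \<in> ?U \<and> simN \<Delta> X lam Q z w}"
      by (rule refl_onI) (simp add: refl)
    show "sym {(z, w). z \<in> ?U \<and> w \<in> ?U \<and> simN \<Delta> X lam Q z w}"
      by (rule symI) (simp add: sym)
    show "trans {(z, w). z \<in> ?U \<and> w \<in> ?U \<and> simN \<Delta> X lam Q z w}"
    proof (rule transI)
      fix a b c
      assume "(a, b) \<in> {(z, w). z \<in> ?U \<and> w \<in> ?U \<and> simN \<Delta> X lam Q z w}"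
        "(b, c) \<in> {(z, w). z \<in> ?U \<and> w \<in> ?U \<and> simN \<Delta> X lam Q z w}"
      then show "(a, c) \<in> {(z, w). z \<in> ?U \<and> w \<in> ?U \<and> simN \<Delta> X lam Q z w}"
        using trans[of a b c] by simp
    qed
  qed
qed

end
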